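(* Let $\epsilon$ be an inversion sequence to which Algorithm A (described below) is applied, and let $\epsilon'$ be the resulting sequence. If $i$ is a transient occurrence of $p$, then $\epsilon'_{i+2}\neq\epsilon'_i$.
   Context: An inversion sequence of length $n$ is an integer sequence with $0\le\epsilon_i<i$ for all $i$. The reduction of an integer word replaces each occurrence of its $k$-th smallest distinct value by $k-1$; a consecutive pattern $\underline{p_1p_2p_3p_4}$ occurs in a sequence at position $i$ if the reduction of its entries in positions $i,\dots,i+3$ equals $p_1p_2p_3p_4$. Let $p=\underline{0102}$ and $q=\underline{0112}$. Algorithm A, on input an integer sequence $\mathrm{seq}=\epsilon_1\cdots\epsilon_n$: let $E_p$, $E_q$ be the sets of positions of occurrences of $p$, resp. $q$, in the input sequence; set $\mathrm{last}:=$ null. For $i=1,2,\dots,n$ in order: let $N_p,N_q$ be the sets of positions of occurrences of $p$, resp. $q$, in the current sequence. If $i-2\in E_p$: set $\mathrm{last}:=\mathrm{seq}[i]$ and $\mathrm{seq}[i]:=\mathrm{seq}[i-1]$. Else if $i-2\in E_q$: set $\mathrm{last}:=\mathrm{seq}[i]$ and $\mathrm{seq}[i]:=\mathrm{seq}[i-2]$. Else if $i-2\in N_p$ or $i-2\in N_q$: swap the values of $\mathrm{seq}[i]$ and $\mathrm{last}$. Output $\mathrm{seq}$. With $\epsilon$ the input and $\epsilon'$ the output: position $i$ is an original occurrence of $p$ if $\epsilon_i=\epsilon_{i+2}$ and $\epsilon_i<\epsilon_{i+1}<\epsilon_{i+3}$; it is a transient occurrence of $p$ if it is not an original occurrence of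 $p$ but $\epsilon'_i=\epsilon_{i+2}$ and $\epsilon'_i<\epsilon_{i+1}<\epsilon_{i+3}$. *)

theory Defs
  imports Main
begin

text \<open>Sequences are lists of naturals; positions are 1-based, as in the paper.\<close>

definition at :: "nat list \<Rightarrow> nat \<Rightarrow> nat" where
  "at s i = s ! (i - 1)"

definition inversion_seq :: "nat list \<Rightarrow> bool" where
  "inversion_seq e \<longleftrightarrow> (\<forall>i. 1 \<le> i \<and> i \<le> length e \<longrightarrow> at e i < i)"

definition reduction :: "nat list \<Rightarrow> nat list" where
  "reduction w = map (\<lambda>x. card {y \<in> set w. y < x}) w"

definition occ :: "nat list \<Rightarrow> nat list \<Rightarrow> nat \<Rightarrow> bool" where
  "occ pat s j \<longleftrightarrow> 1 \<le> j \<and> j + 3 \<le> length s \<and> reduction (take 4 (drop (j - 1) s)) = pat"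

definition pat_p :: "nat list" where "pat_p = [0,1,0,2]"
definition pat_q :: "nat list" where "pat_q = [0,1,1,2]"

text \<open>One step i of Algorithm A, with input sequence e, on state (current seq, last).
  last = None represents null.  Swapping with a null last is never reached;
  we leave the state unchanged in that case.\<close>
definition algA_step :: "nat list \<Rightarrow> nat \<Rightarrow> nat list \<times> nat option \<Rightarrow> nat list \<times> nat option" where
  "algA_step e i st = (let s = fst st; l = snd st in
     if 3 \<le> i \<and> occ pat_p e (i - 2) then (s[i - 1 := at s (i - 1)], Some (at s i))
     else if 3 \<le> i \<and> occ pat_q e (i - 2) then (s[i - 1 := at s (i - 2)], Some (at s i))
     else if 3 \<le> i \<and> (occ pat_p s (i - 2) \<or> occ pat_q s (i - 2)) then
       (case l of None \<Rightarrow> (s, l) | Some v \<Rightarrow> (s[i - 1 := v], Some (at s i)))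
     else (s, l))"

definition algA :: "nat list \<Rightarrow> nat list" where
  "algA e = fst (foldl (\<lambda>st i. algA_step e i st) (e, None) [1..<length e + 1])"

definition original_occ_p :: "nat list \<Rightarrow> nat \<Rightarrow> bool" where
  "original_occ_p e i \<longleftrightarrow> at e i = at e (i + 2) \<and> at e i < at e (i + 1) \<and> at e (i + 1) < at e (i + 3)"

definition transient_occ_p :: "nat list \<Rightarrow> nat \<Rightarrow> bool" where
  "transient_occ_p e i \<longleftrightarrow> \<not> original_occ_p e i \<and>
     (let e' = algA e in at e' i = at e (i + 2) \<and> at e' i < at e (i + 1) \<and> at e (i + 1) < at e (i + 3))"

end

theory Submission
  imports Defs
begin
lemma red_p: fixes a b c d :: nat
  shows "reduction [a,b,c,d] = [0,1,0,2] \<longleftrightarrow> (a = c \<and> a < b \<and> b < d)"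
proof
  assume h: "a = c \<and> a < b \<and> b < d"
  have 1: "{y \<in> set [a,b,c,d]. y < a} = {}" using h by auto
  have 2: "{y \<in> set [a,b,c,d]. y < b} = {a}" using h by auto
  have 3: "{y \<in> set [a,b,c,d]. y < d} = {a,b}" using h by auto
  show "reduction [a,b,c,d] = [0,1,0,2]"
    unfolding reduction_def using h 1 2 3 by simp
next
  assume h: "reduction [a,b,c,d] = [0,1,0,2]"
  let ?S = "set [a,b,c,d]"
  have ca: "card {y \<in> ?S. y < a} = 0" and cb: "card {y \<in> ?S. y < b} = 1"
   and cc: "card {y \<in> ?S. y < c} = 0" and cd: "card {y \<in> ?S. y < d} = 2"
    using h unfolding reduction_def by simp_all
  have fa: "{y \<in> ?S. y < a} = {}" using ca by (simp only: card_eq_0_iff) simp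
  have fc: "{y \<in> ?S. y < c} = {}" using cc by (simp only: card_eq_0_iff) simp
  have "\<not> c < a" proof assume "c < a" then have "c \<in> {y \<in> ?S. y < a}" by simp then show False using fa by blast qed
  moreover have "\<not> a < c" proof assume "a < c" then have "a \<in> {y \<in> ?S. y < c}" by simp then show False using fc by blast qed
  ultimately have ac: "a = c" by simp
  have ab: "a < b"
  proof (rule ccontr)
    assume "\<not> a < b"
    then have "{y \<in> ?S. y < b} = {}" using fa by auto
    then have "card {y \<in> ?S. y < b} = 0" by (simp only: card.empty)
    then show False using cb by linarith
  qed
  have bd: "b < d"
  proof (rule ccontr)
    assume "\<not> b < d"
    then have "{y \<in> ?S. y < d} \<subseteq> {a}" using ac by auto
    then have "card {y \<in> ?S. y < d} \<le> card {a}" by (intro card_mono) auto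
    then show False using cd by simp
  qed
  show "a = c \<and> a < b \<and> b < d" using ac ab bd by simp
qed
lemma red_q: fixes a b c d :: nat
  shows "reduction [a,b,c,d] = [0,1,1,2] \<longleftrightarrow> (a < b \<and> b = c \<and> c < d)"
proof
  assume h: "a < b \<and> b = c \<and> c < d"
  have 1: "{y \<in> set [a,b,c,d]. y < a} = {}" using h by auto
  have 2: "{y \<in> set [a,b,c,d]. y < b} = {a}" using h by auto
  have 3: "{y \<in> set [a,b,c,d]. y < d} = {a,b}" using h by auto
  show "reduction [a,b,c,d] = [0,1,1,2]"
    unfolding reduction_def using h 1 2 3 by simp
next
  assume h: "reduction [a,b,c,d] = [0,1,1,2]"
  let ?S = "set [a,b,c,d]"
  have ca: "card {y \<in> ?S. y < a} = 0" and cb: "card {y \<in> ?S. y < b} = 1"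
   and cc: "card {y \<in> ?S. y < c} = 1" and cd: "card {y \<in> ?S. y < d} = 2"
    using h unfolding reduction_def by simp_all
  have fa: "{y \<in> ?S. y < a} = {}" using ca by (simp only: card_eq_0_iff) simp
  have ab: "a < b"
  proof (rule ccontr)
    assume "\<not> a < b"
    then have "{y \<in> ?S. y < b} = {}" using fa by auto
    then have "card {y \<in> ?S. y < b} = 0" by (simp only: card.empty)
    then show False using cb by linarith
  qed
  have bc: "b = c"
  proof (rule ccontr)
    assume "b \<noteq> c"
    then consider "b < c" | "c < b" by linarith
    then show False
    proof cases
      case 1
      then have "{a,b} \<subseteq> {y \<in> ?S. y < c}" using ab by auto
      then have "card {a,b} \<le> card {y \<in> ?S. y < c}" by (intro card_mono) auto
      then show False using cc ab by simp
    next
      case 2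
      have "\<not> c < a" proof assume "c < a" then have "c \<in> {y \<in> ?S. y < a}" by simp then show False using fa by blast qed
      moreover have "a \<noteq> c"
      proof
        assume "a = c"
        then have "{y \<in> ?S. y < c} = {}" using fa by auto
        then have "card {y \<in> ?S. y < c} = 0" by (simp only: card.empty)
        then show False using cc by linarith
      qed
      ultimately have "a < c" by simp
      then have "{a,c} \<subseteq> {y \<in> ?S. y < b}" using 2 by auto
      then have "card {a,c} \<le> card {y \<in> ?S. y < b}" by (intro card_mono) auto
      then show False using cb \<open>a < c\<close> by simp
    qed
  qed
  have cd2: "c < d"
  proof (rule ccontr)
    assume "\<not> c < d"
    then have "{y \<in> ?S. y < d} \<subseteq> {a}" using bc ab by auto
    then have "card {y \<in> ?S. y < d} \<le> card {a}" by (intro card_mono) auto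
    then show False using cd by simp
  qed
  show "a < b \<and> b = c \<and> c < d" using ab bc cd2 by simp
qed

lemma take4: assumes "1 \<le> j" "j + 3 \<le> length s"
  shows "take 4 (drop (j-1) s) = [at s j, at s (j+1), at s (j+2), at s (j+3)]"
proof (rule nth_equalityI)
  show "length (take 4 (drop (j-1) s)) = length [at s j, at s (j+1), at s (j+2), at s (j+3)]"
    using assms by simp
next
  fix k assume "k < length (take 4 (drop (j-1) s))"
  then have "k < 4" by simp
  then consider "k = 0" | "k = 1" | "k = 2" | "k = 3" by linarith
  then show "take 4 (drop (j-1) s) ! k = [at s j, at s (j+1), at s (j+2), at s (j+3)] ! k"
    using assms by cases (simp_all add: at_def)
qed

lemma occ_p_iff: "occ pat_p s j \<longleftrightarrow> 1 \<le> j \<and> j + 3 \<le> length s \<and>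
   at s j = at s (j+2) \<and> at s j < at s (j+1) \<and> at s (j+1) < at s (j+3)"
  unfolding occ_def pat_p_def using take4 red_p by auto

lemma occ_q_iff: "occ pat_q s j \<longleftrightarrow> 1 \<le> j \<and> j + 3 \<le> length s \<and>
   at s j < at s (j+1) \<and> at s (j+1) = at s (j+2) \<and> at s (j+2) < at s (j+3)"
  unfolding occ_def pat_q_def using take4 red_q by auto

definition stt :: "nat list \<Rightarrow> nat \<Rightarrow> nat list \<times> nat option" where
  "stt e k = foldl (\<lambda>st i. algA_step e i st) (e, None) [1..<k+1]"

lemma stt_0: "stt e 0 = (e, None)" by (simp add: stt_def)
lemma stt_Suc: "stt e (Suc k) = algA_step e (Suc k) (stt e k)" by (simp add: stt_def)
lemma algA_stt: "algA e = fst (stt e (length e))" by (simp add: algA_def stt_def)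

lemma step_len: "length (fst (algA_step e i st)) = length (fst st)"
  unfolding algA_step_def Let_def by (auto split: option.splits)

lemma stt_len: "length (fst (stt e k)) = length e"
  by (induction k) (simp_all add: stt_0 stt_Suc step_len)

lemma step_other: assumes "1 \<le> p" "1 \<le> i" "p \<noteq> i"
  shows "at (fst (algA_step e i st)) p = at (fst st) p"
proof -
  have "p - 1 \<noteq> i - 1" using assms by simp
  then show ?thesis unfolding algA_step_def Let_def at_def by (auto split: option.splits)
qed

lemma stt_future: "k < p \<Longrightarrow> 1 \<le> p \<Longrightarrow> at (fst (stt e k)) p = at e p"
  by (induction k) (simp_all add: stt_0 stt_Suc step_other)

lemma stt_final: "p \<le> k \<Longrightarrow> 1 \<le> p \<Longrightarrow> at (fst (stt e k)) p = at (fst (stt e p)) p"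
proof (induction k)
  case 0 then show ?case by simp
next
  case (Suc k)
  show ?case
  proof (cases "p = Suc k")
    case True then show ?thesis by simp
  next
    case False
    then have "p \<le> k" using Suc.prems by simp
    then show ?thesis using Suc False by (simp add: stt_Suc step_other)
  qed
qed

lemma step_id: "\<not> (3 \<le> i \<and> (occ pat_p e (i-2) \<or> occ pat_q e (i-2) \<or> occ pat_p (fst st) (i-2) \<or> occ pat_q (fst st) (i-2)))
  \<Longrightarrow> algA_step e i st = st"
  unfolding algA_step_def Let_def by auto

lemma step_snd: "algA_step e i st \<noteq> st \<Longrightarrow> snd (algA_step e i st) = Some (at (fst st) i)"
  by (cases st) (auto simp: algA_step_def Let_def split: option.splits if_splits)

lemma step_S: "3 \<le> i \<Longrightarrow> \<not> occ pat_p e (i-2) \<Longrightarrow> \<not> occ pat_q e (i-2) \<Longrightarrow> occ pat_p (fst st) (i-2)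
  \<Longrightarrow> snd st = Some v \<Longrightarrow> fst (algA_step e i st) = (fst st)[i-1 := v]"
  unfolding algA_step_def Let_def by auto


lemma occ_last_lt: "occ pat_p s j \<or> occ pat_q s j \<Longrightarrow> at s (j+2) < at s (j+3)"
  by (auto simp: occ_p_iff occ_q_iff)

theorem lemma5:
  fixes e :: "nat list" and i :: nat
  assumes "inversion_seq e"
    and "1 \<le> i" and "i + 3 \<le> length e"
    and "transient_occ_p e i"
  shows "at (algA e) (i + 2) \<noteq> at (algA e) i"
proof -
  let ?n = "length e"
  define E where "E p = at (fst (stt e p)) p" for p
  have Ealg: "at (algA e) p = E p" if "1 \<le> p" "p \<le> ?n" for p
    using that stt_final[of p ?n e] by (simp add: algA_stt E_def)
  have Ei: "at (algA e) i = E i" using assms Ealg by simp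
  have Ei2: "at (algA e) (i+2) = E (i+2)" using assms Ealg by simp
  have T1: "E i = at e (i+2)" and T2: "E i < at e (i+1)" and T3: "at e (i+1) < at e (i+3)"
   and NO: "\<not> original_occ_p e i"
    using assms(4) Ei unfolding transient_occ_p_def Let_def by auto
  have ne: "E i \<noteq> at e i" using T1 T2 T3 NO unfolding original_occ_p_def by auto
  have i0: "i = Suc (i - 1)" using assms by simp
  let ?s0 = "fst (stt e (i-1))"
  have s0i: "at ?s0 i = at e i" using stt_future[of "i-1" i e] assms by simp
  have s0i1: "at ?s0 (i+1) = at e (i+1)" using stt_future[of "i-1" "i+1" e] assms by simp
  have stti: "stt e i = algA_step e i (stt e (i-1))" using stt_Suc[of e "i-1"] i0 by simp
  have nid: "algA_step e i (stt e (i-1)) \<noteq> stt e (i-1)"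
  proof
    assume "algA_step e i (stt e (i-1)) = stt e (i-1)"
    then have "E i = at ?s0 i" using stti by (simp add: E_def)
    then show False using ne s0i by simp
  qed
  have last_i: "snd (stt e i) = Some (at e i)" using step_snd[OF nid] stti s0i by simp
  have cond: "3 \<le> i \<and> (occ pat_p e (i-2) \<or> occ pat_q e (i-2) \<or> occ pat_p ?s0 (i-2) \<or> occ pat_q ?s0 (i-2))"
    using step_id nid by blast
  have ii: "i - 2 + 2 = i" "i - 2 + 3 = i + 1" using cond by auto
  have lt: "at e i < at e (i+1)"
  proof -
    have "occ pat_p e (i-2) \<or> occ pat_q e (i-2) \<Longrightarrow> at e i < at e (i+1)"
      using occ_last_lt[of e "i-2"] ii by simp
    moreover have "occ pat_p ?s0 (i-2) \<or> occ pat_q ?s0 (i-2) \<Longrightarrow> at e i < at e (i+1)"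
      using occ_last_lt[of ?s0 "i-2"] ii s0i s0i1 by simp
    ultimately show ?thesis using cond by blast
  qed
  let ?s1 = "fst (stt e i)"
  have s1i: "at ?s1 i = E i" by (simp add: E_def)
  have s1i1: "at ?s1 (i+1) = at e (i+1)" using stt_future[of i "i+1" e] by simp
  have s1i2: "at ?s1 (i+2) = at e (i+2)" using stt_future[of i "i+2" e] by simp
  have s1i3: "at ?s1 (i+3) = at e (i+3)" using stt_future[of i "i+3" e] by simp
  have s1len: "length ?s1 = ?n" by (simp add: stt_len)
  have jj: "Suc i - 2 = i - 1" "i - 1 + 1 = i" "i - 1 + 2 = i + 1" "i - 1 + 3 = i + 2" using assms by auto
  have "\<not> occ pat_p e (i-1)" using lt by (auto simp: occ_p_iff jj)
  moreover have "\<not> occ pat_q e (i-1)" using lt by (auto simp: occ_q_iff jj)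
  moreover have "\<not> occ pat_p ?s1 (i-1)"
  proof
    assume "occ pat_p ?s1 (i-1)"
    then have "at ?s1 (i-1+1) < at ?s1 (i-1+3)" unfolding occ_p_iff by blast
    then have "at ?s1 i < at ?s1 (i+2)" by (simp only: jj)
    then show False using T1 s1i s1i2 by simp
  qed
  moreover have "\<not> occ pat_q ?s1 (i-1)"
  proof
    assume "occ pat_q ?s1 (i-1)"
    then have "at ?s1 (i-1+1) = at ?s1 (i-1+2)" unfolding occ_q_iff by blast
    then have "at ?s1 i = at ?s1 (i+1)" by (simp only: jj)
    then show False using T2 s1i s1i1 by simp
  qed
  ultimately have stt1: "stt e (Suc i) = stt e i"
    using step_id[of "Suc i" e "stt e i"] by (simp add: stt_Suc jj)
  have "\<not> occ pat_p e i" using NO by (auto simp: occ_p_iff original_occ_p_def)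
  moreover have "\<not> occ pat_q e i" using T1 T2 by (auto simp: occ_q_iff)
  moreover have "occ pat_p ?s1 i" unfolding occ_p_iff s1i s1i1 s1i2 s1i3 using T1 T2 T3 assms s1len
    by simp
  ultimately have "fst (stt e (Suc (Suc i))) = ?s1[Suc i := at e i]"
    using step_S[of "Suc (Suc i)" e "stt e (Suc i)" "at e i"] last_i stt1 assms(2) by (simp add: stt_Suc)
  then have "E (i+2) = at e i" using s1len assms by (simp add: E_def at_def)
  then show ?thesis using Ei Ei2 ne by simp
qed

end
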